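(* Let $(x^1,x^2,z)$ be coordinates, $a,b\in\{1,2\}$, let $g_{ab}$ be functions of $(x^1,x^2,z)$ forming a positive definite matrix with $(\det g_{ab})_{,z}=0$, let $\beta_a$ be functions with $\beta_{a,z}=0$, and let $c$ be a constant. Then the data $$g=(dz+\beta_adx^a)^2+g_{ab}dx^adx^b,\qquad T^{ij}=c\big(\delta^i_z\delta^j_z-\tfrac13g^{ij}\big)$$ satisfy the momentum constraint $\nabla_iT^{ij}=0$ and $H=0$.
   Context: Initial data: Riemannian metric $g_{ij}$ and symmetric tensor $K_{ij}$; $H=g^{ij}K_{ij}$, $T^{ij}=K^{ij}-Hg^{ij}$ (so $K^{ij}=T^{ij}-\frac12(g_{kl}T^{kl})g^{ij}$). Momentum constraint: $\nabla_iT^{ij}=0$. *)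

theory Defs
  imports "HOL-Analysis.Analysis"
begin

text \<open>Coordinates on R^3: index 1 = x^1, index 2 = x^2, index 3 = z
  (indices live in the numeral type 3).\<close>

definition zidx :: 3 where "zidx = 3"

definition pd :: "(real^3 \<Rightarrow> real) \<Rightarrow> 3 \<Rightarrow> real^3 \<Rightarrow> real" where
  "pd f k p = deriv (\<lambda>t. f (p + t *\<^sub>R axis k 1)) 0"

definition idx2 :: "3 \<Rightarrow> 2" where "idx2 i = (if i = 1 then 1 else 2)"

text \<open>The metric g = (dz + beta_a dx^a)^2 + g_ab dx^a dx^b as a 3x3 matrix field.\<close>
definition kk_metric :: "(real^3 \<Rightarrow> real^2^2) \<Rightarrow> (real^3 \<Rightarrow> real^2) \<Rightarrow> real^3 \<Rightarrow> real^3^3" where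
  "kk_metric h \<beta> p = (\<chi> i j.
     (if i = zidx then 1 else \<beta> p $ idx2 i) * (if j = zidx then 1 else \<beta> p $ idx2 j)
     + (if i \<noteq> zidx \<and> j \<noteq> zidx then h p $ idx2 i $ idx2 j else 0))"

definition inv_metric :: "(real^3 \<Rightarrow> real^3^3) \<Rightarrow> real^3 \<Rightarrow> real^3^3" where
  "inv_metric G p = matrix_inv (G p)"

definition christoffel :: "(real^3 \<Rightarrow> real^3^3) \<Rightarrow> 3 \<Rightarrow> 3 \<Rightarrow> 3 \<Rightarrow> real^3 \<Rightarrow> real" where
  "christoffel G i j k p = (1/2) * (\<Sum>l\<in>UNIV. inv_metric G p $ i $ l *
      (pd (\<lambda>q. G q $ l $ k) j p + pd (\<lambda>q. G q $ l $ j) k p - pd (\<lambda>q. G q $ j $ k) l p))"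

definition cov_div :: "(real^3 \<Rightarrow> real^3^3) \<Rightarrow> (real^3 \<Rightarrow> real^3^3) \<Rightarrow> 3 \<Rightarrow> real^3 \<Rightarrow> real" where
  "cov_div G T j p =
     (\<Sum>i\<in>UNIV. pd (\<lambda>q. T q $ i $ j) i p)
     + (\<Sum>i\<in>UNIV. \<Sum>k\<in>UNIV. christoffel G i i k p * T p $ k $ j)
     + (\<Sum>i\<in>UNIV. \<Sum>k\<in>UNIV. christoffel G j i k p * T p $ i $ k)"

definition K_up :: "(real^3 \<Rightarrow> real^3^3) \<Rightarrow> (real^3 \<Rightarrow> real^3^3) \<Rightarrow> real^3 \<Rightarrow> real^3^3" where
  "K_up G T p = (\<chi> i j. T p $ i $ j
      - (1/2) * (\<Sum>k\<in>UNIV. \<Sum>l\<in>UNIV. G p $ k $ l * T p $ k $ l) * inv_metric G p $ i $ j)"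

definition K_down :: "(real^3 \<Rightarrow> real^3^3) \<Rightarrow> (real^3 \<Rightarrow> real^3^3) \<Rightarrow> real^3 \<Rightarrow> real^3^3" where
  "K_down G T p = (\<chi> i j. \<Sum>k\<in>UNIV. \<Sum>l\<in>UNIV. G p $ i $ k * K_up G T p $ k $ l * G p $ l $ j)"

definition mean_curv :: "(real^3 \<Rightarrow> real^3^3) \<Rightarrow> (real^3 \<Rightarrow> real^3^3) \<Rightarrow> real^3 \<Rightarrow> real" where
  "mean_curv G T p = (\<Sum>i\<in>UNIV. \<Sum>j\<in>UNIV. inv_metric G p $ i $ j * K_down G T p $ i $ j)"

definition T_field :: "real \<Rightarrow> (real^3 \<Rightarrow> real^3^3) \<Rightarrow> real^3 \<Rightarrow> real^3^3" where
  "T_field c G p = (\<chi> i j. c * ((if i = zidx \<and> j = zidx then 1 else 0) - (1/3) * inv_metric G p $ i $ j))"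

end

theory Submission
  imports Defs
begin


lemma line_deriv:
  fixes f :: "real^3 \<Rightarrow> real"
  assumes "f differentiable (at p)"
  shows "\<exists>d. ((\<lambda>t. f (p + t *\<^sub>R v)) has_real_derivative d) (at 0)"
proof -
  obtain f' where f': "(f has_derivative f') (at p)" using assms differentiable_def by blast
  have l: "((\<lambda>t::real. p + t *\<^sub>R v) has_derivative (\<lambda>t. t *\<^sub>R v)) (at 0)"
    by (auto intro!: derivative_eq_intros)
  have "((\<lambda>t. f (p + t *\<^sub>R v)) has_derivative (f' \<circ> (\<lambda>t. t *\<^sub>R v))) (at 0)"
    using diff_chain_at[OF l, of f f'] f' by (simp add: o_def)
  moreover have "f' \<circ> (\<lambda>t. t *\<^sub>R v) = (*) (f' v)"
    using has_derivative_linear[OF f'] by (auto simp: o_def linear_scale fun_eq_iff)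
  ultimately show ?thesis unfolding has_field_derivative_def by metis
qed

lemma pd_deriv:
  assumes "f differentiable (at p)"
  shows "((\<lambda>t. f (p + t *\<^sub>R axis k 1)) has_real_derivative pd f k p) (at 0)"
proof -
  obtain d where d: "((\<lambda>t. f (p + t *\<^sub>R axis k 1)) has_real_derivative d) (at 0)"
    using line_deriv[OF assms] by blast
  then show ?thesis unfolding pd_def using DERIV_imp_deriv by metis
qed

lemma pd_eqI:
  assumes "((\<lambda>t. f (p + t *\<^sub>R axis k 1)) has_real_derivative d) (at 0)"
  shows "pd f k p = d"
  unfolding pd_def using DERIV_imp_deriv[OF assms] .

lemma pd_mult:
  assumes "f differentiable (at p)" "g differentiable (at p)"
  shows "pd (\<lambda>q. f q * g q) k p = pd f k p * g p + f p * pd g k p"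
  by (rule pd_eqI) (auto intro!: derivative_eq_intros pd_deriv assms)

lemma pd_add:
  assumes "f differentiable (at p)" "g differentiable (at p)"
  shows "pd (\<lambda>q. f q + g q) k p = pd f k p + pd g k p"
  by (rule pd_eqI) (auto intro!: derivative_eq_intros pd_deriv assms)

lemma pd_diff:
  assumes "f differentiable (at p)" "g differentiable (at p)"
  shows "pd (\<lambda>q. f q - g q) k p = pd f k p - pd g k p"
  by (rule pd_eqI) (auto intro!: derivative_eq_intros pd_deriv assms)

lemma pd_const: "pd (\<lambda>q. c) k p = 0"
  by (rule pd_eqI) (auto intro!: derivative_eq_intros)

lemma pd_cmult:
  assumes "f differentiable (at p)"
  shows "pd (\<lambda>q. c * f q) k p = c * pd f k p"
  by (rule pd_eqI) (auto intro!: derivative_eq_intros pd_deriv assms)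

lemma pd_sum:
  assumes "\<And>i. f i differentiable (at p)"
  shows "pd (\<lambda>q. \<Sum>i\<in>(UNIV::'a::finite set). f i q) k p = (\<Sum>i\<in>UNIV. pd (f i) k p)"
  by (rule pd_eqI) (auto intro!: derivative_eq_intros pd_deriv assms DERIV_sum)

lemma pd_local:
  assumes "open U" "p \<in> U" "\<And>q. q \<in> U \<Longrightarrow> f q = g q"
  shows "pd f k p = pd g k p"
  unfolding pd_def
proof (rule deriv_cong_ev)
  obtain e where e: "e > 0" "ball p e \<subseteq> U" using assms(1,2) open_contains_ball by blast
  have "\<forall>\<^sub>F t in nhds 0. p + t *\<^sub>R axis k 1 \<in> U"
    unfolding eventually_nhds_metric
  proof (intro exI[of _ e] conjI allI impI)
    fix t :: real assume "dist t 0 < e"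
    then have "dist p (p + t *\<^sub>R axis k 1) < e" by (simp add: dist_norm)
    then show "p + t *\<^sub>R axis k 1 \<in> U" using e by auto
  qed (use e in auto)
  then show "\<forall>\<^sub>F t in nhds 0. f (p + t *\<^sub>R axis k 1) = g (p + t *\<^sub>R axis k 1)"
    by eventually_elim (use assms(3) in auto)
qed simp



lemma divA:
  fixes M :: "3 \<Rightarrow> 3 \<Rightarrow> real" and dG :: "3 \<Rightarrow> 3 \<Rightarrow> 3 \<Rightarrow> real"
  assumes sM: "\<And>i j. M i j = M j i" and sG: "\<And>k i j. dG k i j = dG k j i"
  shows "(\<Sum>i\<in>UNIV. - (\<Sum>a\<in>UNIV. \<Sum>b\<in>UNIV. M i a * dG i a b * M b j))
     + (\<Sum>i\<in>UNIV. \<Sum>k\<in>UNIV. ((1/2) * (\<Sum>l\<in>UNIV. M i l * (dG i l k + dG k l i - dG l i k))) * M k j)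
     + (\<Sum>i\<in>UNIV. \<Sum>k\<in>UNIV. ((1/2) * (\<Sum>l\<in>UNIV. M j l * (dG i l k + dG k l i - dG l i k))) * M i k) = 0"
proof -
  have s: "M 2 1 = M 1 2" "M 3 1 = M 1 3" "M 3 2 = M 2 3"
     "\<And>k. dG k 2 1 = dG k 1 2" "\<And>k. dG k 3 1 = dG k 1 3" "\<And>k. dG k 3 2 = dG k 2 3"
    using sM sG by auto
  have "j = 1 \<or> j = 2 \<or> j = 3" using exhaust_3 by blast
  then show ?thesis
    by (elim disjE; simp only: sum_3 s; simp add: algebra_simps)
qed



lemma divB:
  fixes M :: "3 \<Rightarrow> 3 \<Rightarrow> real" and dG :: "3 \<Rightarrow> 3 \<Rightarrow> 3 \<Rightarrow> real" and c :: real
  assumes sM: "\<And>i j. M i j = M j i" and sG: "\<And>k i j. dG k i j = dG k j i"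
    and z1: "\<And>l. dG 3 l 3 = 0" and z2: "\<And>k. dG k 3 3 = 0"
    and S: "(\<Sum>i\<in>UNIV. \<Sum>l\<in>UNIV. M i l * dG 3 l i) = 0"
  shows "(\<Sum>i\<in>UNIV. - (c/3) * - (\<Sum>a\<in>UNIV. \<Sum>b\<in>UNIV. M i a * dG i a b * M b j))
     + (\<Sum>i\<in>UNIV. \<Sum>k\<in>UNIV. ((1/2) * (\<Sum>l\<in>UNIV. M i l * (dG i l k + dG k l i - dG l i k))) * (c * ((if k = 3 \<and> j = 3 then 1 else 0) - 1/3 * M k j)))
     + (\<Sum>i\<in>UNIV. \<Sum>k\<in>UNIV. ((1/2) * (\<Sum>l\<in>UNIV. M j l * (dG i l k + dG k l i - dG l i k))) * (c * ((if i = 3 \<and> k = 3 then 1 else 0) - 1/3 * M i k))) = 0" (is "?L = 0")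
proof -
  let ?A = "(\<Sum>i\<in>UNIV. - (\<Sum>a\<in>UNIV. \<Sum>b\<in>UNIV. M i a * dG i a b * M b j))
     + (\<Sum>i\<in>UNIV. \<Sum>k\<in>UNIV. ((1/2) * (\<Sum>l\<in>UNIV. M i l * (dG i l k + dG k l i - dG l i k))) * M k j)
     + (\<Sum>i\<in>UNIV. \<Sum>k\<in>UNIV. ((1/2) * (\<Sum>l\<in>UNIV. M j l * (dG i l k + dG k l i - dG l i k))) * M i k)"
  have A: "?A = 0" by (rule divA[OF sM sG])
  have s: "M 2 1 = M 1 2" "M 3 1 = M 1 3" "M 3 2 = M 2 3"
     "\<And>k. dG k 2 1 = dG k 1 2" "\<And>k. dG k 3 1 = dG k 1 3" "\<And>k. dG k 3 2 = dG k 2 3"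
    using sM sG by auto
  have zz: "dG 3 1 3 = 0" "dG 3 2 3 = 0" "dG 3 3 3 = 0" "dG 1 3 3 = 0" "dG 2 3 3 = 0"
    using z1 z2 by auto
  have S': "M 1 1 * dG 3 1 1 + M 1 2 * dG 3 1 2 + M 1 3 * dG 3 1 3 +
    (M 1 2 * dG 3 1 2 + M 2 2 * dG 3 2 2 + M 2 3 * dG 3 2 3) +
    (M 1 3 * dG 3 1 3 + M 2 3 * dG 3 2 3 + M 3 3 * dG 3 3 3) = 0"
    using S by (simp only: sum_3 s)
  have "j = 1 \<or> j = 2 \<or> j = 3" using exhaust_3 by blast
  then have "?L = (-(c/3)) * ?A + c * (if j = 3 then (1/2) * (\<Sum>i\<in>UNIV. \<Sum>l\<in>UNIV. M i l * dG 3 l i) else 0)"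
    by (elim disjE; simp only: sum_3 s; simp add: zz algebra_simps; simp add: field_simps)
  then show ?thesis using A S by simp
qed



lemma dM_formula:
  fixes M G dG dM :: "'n::finite \<Rightarrow> 'n \<Rightarrow> real"
  assumes MG: "\<And>m l. (\<Sum>i\<in>UNIV. M m i * G i l) = (if m = l then 1 else 0)"
    and H: "\<And>i j. (\<Sum>l\<in>UNIV. dG i l * M l j + G i l * dM l j) = 0"
  shows "dM m j = - (\<Sum>a\<in>UNIV. \<Sum>b\<in>UNIV. M m a * dG a b * M b j)"
proof -
  have "dM m j = (\<Sum>l\<in>UNIV. if m = l then dM l j else 0)" by simp
  also have "\<dots> = (\<Sum>l\<in>UNIV. (if m = l then 1 else 0) * dM l j)"
    by (rule sum.cong) auto
  also have "\<dots> = (\<Sum>l\<in>UNIV. \<Sum>i\<in>UNIV. M m i * (G i l * dM l j))"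
    by (simp add: MG[symmetric] sum_distrib_right mult.assoc)
  also have "\<dots> = (\<Sum>i\<in>UNIV. M m i * (\<Sum>l\<in>UNIV. G i l * dM l j))"
    by (subst sum.swap) (simp add: sum_distrib_left)
  also have "\<dots> = (\<Sum>i\<in>UNIV. M m i * (- (\<Sum>l\<in>UNIV. dG i l * M l j)))"
  proof (rule sum.cong[OF refl])
    fix i
    have "(\<Sum>l\<in>UNIV. G i l * dM l j) = - (\<Sum>l\<in>UNIV. dG i l * M l j)"
      using H[of i j] by (simp add: sum.distrib eq_neg_iff_add_eq_0 add.commute)
    then show "M m i * (\<Sum>l\<in>UNIV. G i l * dM l j) = M m i * (- (\<Sum>l\<in>UNIV. dG i l * M l j))" by simp
  qed
  also have "\<dots> = - (\<Sum>a\<in>UNIV. \<Sum>b\<in>UNIV. M m a * dG a b * M b j)"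
    by (simp add: sum_distrib_left sum_negf mult.assoc)
  finally show ?thesis .
qed

lemma meanH:
  fixes M G :: "3 \<Rightarrow> 3 \<Rightarrow> real" and c :: real and z :: 3
  assumes MG: "\<And>m l. (\<Sum>i\<in>UNIV. M m i * G i l) = (if m = l then 1 else 0)"
    and GM: "\<And>m l. (\<Sum>i\<in>UNIV. G m i * M i l) = (if m = l then 1 else 0)"
    and sM: "\<And>i j. M i j = M j i" and sG: "\<And>i j. G i j = G j i"
    and G33: "G z z = 1"
    and T: "\<And>k l. T k l = c * ((if k = z \<and> l = z then 1 else 0) - 1/3 * M k l)"
    and K: "\<And>k l. K k l = T k l - 1/2 * (\<Sum>k\<in>UNIV. \<Sum>l\<in>UNIV. G k l * T k l) * M k l"
  shows "(\<Sum>i\<in>UNIV. \<Sum>j\<in>UNIV. M i j * (\<Sum>k\<in>UNIV. \<Sum>l\<in>UNIV. G i k * K k l * G l j)) = 0"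
proof -
  have GMt: "(\<Sum>k\<in>UNIV. \<Sum>l\<in>UNIV. G k l * M k l) = 3"
  proof -
    have "(\<Sum>k\<in>UNIV. \<Sum>l\<in>UNIV. G k l * M k l) = (\<Sum>k\<in>UNIV. (\<Sum>l\<in>UNIV. G k l * M l k))"
      using sM by simp
    also have "\<dots> = (\<Sum>k\<in>(UNIV::3 set). 1)" using GM by simp
    finally show ?thesis by simp
  qed
  have GE: "(\<Sum>k\<in>UNIV. \<Sum>l\<in>UNIV. G k l * (if k = z \<and> l = z then 1 else 0)) = 1"
  proof -
    have "\<And>k l. G k l * (if k = z \<and> l = z then 1 else 0) = (if l = z then (if k = z then G z z else 0) else 0)"
      by auto
    then show ?thesis using G33 by simp
  qed
  have tr: "(\<Sum>k\<in>UNIV. \<Sum>l\<in>UNIV. G k l * T k l) = 0"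
  proof -
    have "(\<Sum>k\<in>UNIV. \<Sum>l\<in>UNIV. G k l * T k l) =
      c * (\<Sum>k\<in>UNIV. \<Sum>l\<in>UNIV. G k l * (if k = z \<and> l = z then 1 else 0))
      - c/3 * (\<Sum>k\<in>UNIV. \<Sum>l\<in>UNIV. G k l * M k l)"
      by (simp add: T algebra_simps sum.distrib sum_subtractf sum_distrib_left)
    then show ?thesis using GE GMt by simp
  qed
  have KT: "\<And>k l. K k l = T k l" using K tr by simp
  have s: "M 2 1 = M 1 2" "M 3 1 = M 1 3" "M 3 2 = M 2 3" using sM by auto
  note sM3 = s
  have "(\<Sum>i\<in>UNIV. \<Sum>j\<in>UNIV. M i j * (\<Sum>k\<in>UNIV. \<Sum>l\<in>UNIV. G i k * K k l * G l j))
     = (\<Sum>k\<in>UNIV. \<Sum>l\<in>UNIV. T k l * (\<Sum>j\<in>UNIV. G l j * (\<Sum>i\<in>UNIV. M j i * G i k)))"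
    unfolding KT using sM3 by (simp only: sum_3 s; simp add: algebra_simps)
  also have "\<dots> = (\<Sum>k\<in>UNIV. \<Sum>l\<in>UNIV. T k l * G l k)"
    by (simp add: MG if_distrib[of "(*) _"] cong: if_cong)
  also have "\<dots> = 0" using tr sG by (simp add: mult.commute)
  finally show ?thesis .
qed



definition Minv :: "real^2^2 \<Rightarrow> real^2 \<Rightarrow> real^3^3" where
 "Minv H B = (\<chi> i j.
   (let a = H$1$1; b = H$1$2; d = H$2$2; u = B$1; v = B$2; D = a*d - b*b in
   if i = 1 then (if j = 1 then d/D else if j = 2 then -b/D else -(d*u - b * v)/D)
   else if i = 2 then (if j = 1 then -b/D else if j = 2 then a/D else -(a * v - b*u)/D)
   else (if j = 1 then -(d*u - b * v)/D else if j = 2 then -(a * v - b*u)/D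
         else 1 + (u*(d*u - b * v) + v * (a * v - b*u))/D)))"

lemma matrix_inv_eqI:
  fixes A B :: "real^3^3"
  assumes "A ** B = mat 1" "B ** A = mat 1"
  shows "matrix_inv A = B"
proof -
  have ex: "\<exists>A'. A ** A' = mat 1 \<and> A' ** A = mat 1" using assms by blast
  have "A ** matrix_inv A = mat 1 \<and> matrix_inv A ** A = mat 1"
    unfolding matrix_inv_def by (rule someI_ex[OF ex])
  then have "matrix_inv A = matrix_inv A ** (A ** B)" using assms by (simp add: matrix_mul_rid)
  also have "\<dots> = B" using \<open>A ** matrix_inv A = mat 1 \<and> matrix_inv A ** A = mat 1\<close>
    by (simp add: matrix_mul_assoc matrix_mul_lid)
  finally show ?thesis .
qed

lemma num3: "(1::3) \<noteq> 2" "(1::3) \<noteq> 3" "(2::3) \<noteq> 3" "(2::3) \<noteq> 1" "(3::3) \<noteq> 1" "(3::3) \<noteq> 2"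
  by simp_all

lemma kk_entries:
  "kk_metric h \<beta> q $ 1 $ 1 = \<beta> q $ 1 * \<beta> q $ 1 + h q $ 1 $ 1"
  "kk_metric h \<beta> q $ 1 $ 2 = \<beta> q $ 1 * \<beta> q $ 2 + h q $ 1 $ 2"
  "kk_metric h \<beta> q $ 2 $ 1 = \<beta> q $ 2 * \<beta> q $ 1 + h q $ 2 $ 1"
  "kk_metric h \<beta> q $ 2 $ 2 = \<beta> q $ 2 * \<beta> q $ 2 + h q $ 2 $ 2"
  "kk_metric h \<beta> q $ 1 $ 3 = \<beta> q $ 1"
  "kk_metric h \<beta> q $ 2 $ 3 = \<beta> q $ 2"
  "kk_metric h \<beta> q $ 3 $ 1 = \<beta> q $ 1"
  "kk_metric h \<beta> q $ 3 $ 2 = \<beta> q $ 2"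
  "kk_metric h \<beta> q $ 3 $ 3 = 1"
  by (simp_all add: kk_metric_def zidx_def idx2_def)

lemma Minv_entries:
  fixes H :: "real^2^2" and B :: "real^2"
  defines "D \<equiv> H$1$1*H$2$2 - H$1$2*H$1$2"
  shows
  "Minv H B $ 1 $ 1 = H$2$2/D"
  "Minv H B $ 1 $ 2 = -H$1$2/D"
  "Minv H B $ 1 $ 3 = -(H$2$2*B$1 - H$1$2*B$2)/D"
  "Minv H B $ 2 $ 1 = -H$1$2/D"
  "Minv H B $ 2 $ 2 = H$1$1/D"
  "Minv H B $ 2 $ 3 = -(H$1$1*B$2 - H$1$2*B$1)/D"
  "Minv H B $ 3 $ 1 = -(H$2$2*B$1 - H$1$2*B$2)/D"
  "Minv H B $ 3 $ 2 = -(H$1$1*B$2 - H$1$2*B$1)/D"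
  "Minv H B $ 3 $ 3 = 1 + (B$1*(H$2$2*B$1 - H$1$2*B$2) + B$2*(H$1$1*B$2 - H$1$2*B$1))/D"
  by (simp_all add: Minv_def D_def Let_def)

lemma Minv_inverse:
  assumes D: "h q $1$1 * h q $2$2 - h q $1$2 * h q $1$2 \<noteq> 0" and s: "h q $2$1 = h q $1$2"
  shows "kk_metric h \<beta> q ** Minv (h q) (\<beta> q) = mat 1"
    "Minv (h q) (\<beta> q) ** kk_metric h \<beta> q = mat 1"
proof -
  define D where "D = h q $1$1 * h q $2$2 - h q $1$2 * h q $1$2"
  have D0: "D \<noteq> 0" using D D_def by simp
  note e = kk_entries Minv_entries s
  show "kk_metric h \<beta> q ** Minv (h q) (\<beta> q) = mat 1"
    unfolding vec_eq_iff forall_3 matrix_matrix_mult_def sum_3 mat_def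
    apply (simp only: vec_lambda_beta e num3 if_False if_True simp_thms D_def[symmetric])
    using D0 by (intro conjI; simp add: field_simps; unfold D_def; algebra)
  show "Minv (h q) (\<beta> q) ** kk_metric h \<beta> q = mat 1"
    unfolding vec_eq_iff forall_3 matrix_matrix_mult_def sum_3 mat_def
    apply (simp only: vec_lambda_beta e num3 if_False if_True simp_thms D_def[symmetric])
    using D0 by (intro conjI; simp add: field_simps; unfold D_def; algebra)
qed



lemma nth_diff:
  fixes f :: "real^3 \<Rightarrow> 'a::real_normed_vector^'n"
  assumes "f differentiable (at p)"
  shows "(\<lambda>q. f q $ i) differentiable (at p)"
proof -
  obtain f' where "(f has_derivative f') (at p)" using assms differentiable_def by blast
  then have "((\<lambda>q. f q $ i) has_derivative (\<lambda>x. f' x $ i)) (at p)"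
    using bounded_linear.has_derivative[OF bounded_linear_vec_nth] by blast
  then show ?thesis using differentiable_def by blast
qed

lemma G_diff:
  assumes hd: "h differentiable (at p)" and bd: "\<beta> differentiable (at p)"
  shows "(\<lambda>q. kk_metric h \<beta> q $ i $ j) differentiable (at p)"
proof -
  have h: "\<And>a b. (\<lambda>q. h q $ a $ b) differentiable (at p)"
    using nth_diff[OF nth_diff[OF hd]] by blast
  have b: "\<And>a. (\<lambda>q. \<beta> q $ a) differentiable (at p)"
    using nth_diff[OF bd] by blast
  have "i = 1 \<or> i = 2 \<or> i = 3" "j = 1 \<or> j = 2 \<or> j = 3" using exhaust_3 by blast+
  then show ?thesis
    by (elim disjE; simp only: kk_entries; intro derivative_intros h b)
qed

lemma Minv_diff:
  fixes h :: "real^3 \<Rightarrow> real^2^2" and \<beta> :: "real^3 \<Rightarrow> real^2"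
  assumes hd: "h differentiable (at p)" and bd: "\<beta> differentiable (at p)"
    and D0: "h p $1$1 * h p $2$2 - h p $1$2 * h p $1$2 \<noteq> 0"
  shows "(\<lambda>q. Minv (h q) (\<beta> q) $ i $ j) differentiable (at p)"
proof -
  have h: "\<And>a b. (\<lambda>q. h q $ a $ b) differentiable (at p)"
    using nth_diff[OF nth_diff[OF hd]] by blast
  have b: "\<And>a. (\<lambda>q. \<beta> q $ a) differentiable (at p)"
    using nth_diff[OF bd] by blast
  have "i = 1 \<or> i = 2 \<or> i = 3" "j = 1 \<or> j = 2 \<or> j = 3" using exhaust_3 by blast+
  then show ?thesis
    by (elim disjE; simp only: Minv_entries; intro derivative_intros h b D0)
qed



theorem corollary3p2:
  fixes U :: "(real^3) set"
    and h :: "real^3 \<Rightarrow> real^2^2"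
    and \<beta> :: "real^3 \<Rightarrow> real^2"
    and c :: real
  assumes "open U"
    and "h differentiable_on U"
    and "\<beta> differentiable_on U"
    and "\<forall>p\<in>U. transpose (h p) = h p"
    and "\<forall>p\<in>U. \<forall>v::real^2. v \<noteq> 0 \<longrightarrow> v \<bullet> (h p *v v) > 0"
    and "\<forall>p\<in>U. pd (\<lambda>q. det (h q)) zidx p = 0"
    and "\<forall>p\<in>U. \<forall>a. pd (\<lambda>q. \<beta> q $ a) zidx p = 0"
  shows "\<forall>p\<in>U.
           (\<forall>j. cov_div (kk_metric h \<beta>) (T_field c (kk_metric h \<beta>)) j p = 0)
         \<and> mean_curv (kk_metric h \<beta>) (T_field c (kk_metric h \<beta>)) p = 0"
proof
  fix p assume pU: "p \<in> U"
  note oU = assms(1)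
  define G where "G = kk_metric h \<beta>"
  have sym: "h q $ 2 $ 1 = h q $ 1 $ 2" if "q \<in> U" for q
  proof -
    have "transpose (h q) $ 1 $ 2 = h q $ 1 $ 2" using assms(4) that by simp
    then show ?thesis by (simp add: transpose_def)
  qed
  have Dpos: "h q $1$1 * h q $2$2 - h q $1$2 * h q $1$2 > 0" if qU: "q \<in> U" for q
  proof -
    define a where "a = h q $1$1"
    define b where "b = h q $1$2"
    define d where "d = h q $2$2"
    have hq21: "h q $2$1 = b" using sym[OF qU] b_def by simp
    have "axis 1 (1::real) \<noteq> 0" by (simp add: axis_eq_0_iff)
    then have "axis 1 (1::real) \<bullet> (h q *v axis 1 1) > 0" using assms(5) qU by blast
    then have a0: "a > 0"
      by (simp add: a_def inner_vec_def matrix_vector_mult_def sum_2 axis_def)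
    define w :: "real^2" where "w = (\<chi> i. if i = 1 then b else -a)"
    have "w $ 2 = -a" by (simp add: w_def)
    then have "w \<noteq> 0" using a0 by (metis neg_0_equal_iff_equal order_less_irrefl zero_index)
    then have "w \<bullet> (h q *v w) > 0" using assms(5) qU by blast
    then have "a * (a*d - b*b) > 0"
      by (simp add: w_def inner_vec_def matrix_vector_mult_def sum_2 hq21
           a_def[symmetric] b_def[symmetric] d_def[symmetric] algebra_simps)
    then show ?thesis using a0 by (simp add: a_def b_def d_def zero_less_mult_iff)
  qed
  have Dne: "h q $1$1 * h q $2$2 - h q $1$2 * h q $1$2 \<noteq> 0" if "q \<in> U" for q
    using Dpos[OF that] by simp
  have inv: "inv_metric G q = Minv (h q) (\<beta> q)" if "q \<in> U" for q
    unfolding inv_metric_def G_def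
    by (rule matrix_inv_eqI; rule Minv_inverse[where h=h and q=q, OF Dne[OF that] sym[OF that]])
  have hd: "h differentiable (at p)" and bd: "\<beta> differentiable (at p)"
    using assms(2,3) oU pU differentiable_on_eq_differentiable_at by blast+
  have Gd: "\<And>i j. (\<lambda>q. G q $ i $ j) differentiable (at p)"
    unfolding G_def by (rule G_diff[OF hd bd])
  have Md: "\<And>i j. (\<lambda>q. Minv (h q) (\<beta> q) $ i $ j) differentiable (at p)"
    by (rule Minv_diff[OF hd bd Dne[OF pU]])
  define M where "M = (\<lambda>i j. Minv (h p) (\<beta> p) $ i $ j)"
  define dG where "dG = (\<lambda>k i j. pd (\<lambda>q. G q $ i $ j) k p)"
  define dM where "dM = (\<lambda>k i j. pd (\<lambda>q. Minv (h q) (\<beta> q) $ i $ j) k p)"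
  have MG: "\<And>m l. (\<Sum>i\<in>UNIV. M m i * G p $ i $ l) = (if m = l then 1 else 0)"
  proof -
    fix m l
    have "(Minv (h p) (\<beta> p) ** G p) $ m $ l = mat 1 $ m $ l"
      using Minv_inverse(2)[where h=h and q=p and \<beta>=\<beta>, OF Dne[OF pU] sym[OF pU]] G_def by simp
    then show "(\<Sum>i\<in>UNIV. M m i * G p $ i $ l) = (if m = l then 1 else 0)"
      by (simp add: matrix_matrix_mult_def mat_def M_def)
  qed
  have GMq: "\<And>m l. (\<Sum>i\<in>UNIV. G q $ m $ i * Minv (h q) (\<beta> q) $ i $ l) = (if m = l then 1 else 0)"
    if "q \<in> U" for q
  proof -
    fix m l
    have "(G q ** Minv (h q) (\<beta> q)) $ m $ l = mat 1 $ m $ l"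
      using Minv_inverse(1)[where h=h and q=q and \<beta>=\<beta>, OF Dne[OF that] sym[OF that]] G_def by simp
    then show "(\<Sum>i\<in>UNIV. G q $ m $ i * Minv (h q) (\<beta> q) $ i $ l) = (if m = l then 1 else 0)"
      by (simp add: matrix_matrix_mult_def mat_def)
  qed
  have GM: "\<And>m l. (\<Sum>i\<in>UNIV. G p $ m $ i * M i l) = (if m = l then 1 else 0)"
    using GMq[OF pU] M_def by simp
  have sM: "\<And>i j. M i j = M j i"
  proof -
    fix i j :: 3
    have "i = 1 \<or> i = 2 \<or> i = 3" "j = 1 \<or> j = 2 \<or> j = 3" using exhaust_3 by blast+
    then show "M i j = M j i" unfolding M_def by (elim disjE; simp only: Minv_entries)
  qed
  have sGq: "G q $ i $ j = G q $ j $ i" if "q \<in> U" for q i j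
  proof -
    have "i = 1 \<or> i = 2 \<or> i = 3" "j = 1 \<or> j = 2 \<or> j = 3" using exhaust_3 by blast+
    then show ?thesis unfolding G_def
      by (elim disjE; simp only: kk_entries sym[OF that] mult.commute)
  qed
  have sGp: "\<And>i j. G p $ i $ j = G p $ j $ i" using sGq[OF pU] by blast
  have sG: "\<And>k i j. dG k i j = dG k j i"
    unfolding dG_def by (rule pd_local[OF oU pU]) (rule sGq)
  have Hk: "\<And>i j. (\<Sum>l\<in>UNIV. dG k i l * M l j + G p $ i $ l * dM k l j) = 0" for k
  proof -
    fix i j
    have "pd (\<lambda>q. \<Sum>l\<in>UNIV. G q $ i $ l * Minv (h q) (\<beta> q) $ l $ j) k p
        = pd (\<lambda>q. if i = j then 1 else 0) k p"
      by (rule pd_local[OF oU pU]) (rule GMq)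
    also have "\<dots> = 0" by (rule pd_const)
    finally have "pd (\<lambda>q. \<Sum>l\<in>UNIV. G q $ i $ l * Minv (h q) (\<beta> q) $ l $ j) k p = 0" .
    moreover have "pd (\<lambda>q. \<Sum>l\<in>UNIV. G q $ i $ l * Minv (h q) (\<beta> q) $ l $ j) k p
        = (\<Sum>l\<in>UNIV. dG k i l * M l j + G p $ i $ l * dM k l j)"
      by (subst pd_sum) (auto intro!: derivative_intros Gd Md sum.cong simp: pd_mult[OF Gd Md] dG_def dM_def M_def)
    ultimately show "(\<Sum>l\<in>UNIV. dG k i l * M l j + G p $ i $ l * dM k l j) = 0" by simp
  qed
  have dMf: "\<And>k m j. dM k m j = - (\<Sum>a\<in>UNIV. \<Sum>b\<in>UNIV. M m a * dG k a b * M b j)"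
  proof -
    fix k m j
    show "dM k m j = - (\<Sum>a\<in>UNIV. \<Sum>b\<in>UNIV. M m a * dG k a b * M b j)"
      by (rule dM_formula[where G = "\<lambda>i j. G p $ i $ j" and dM = "dM k", OF MG Hk])
  qed
  have hcd: "\<And>a b. (\<lambda>q. h q $ a $ b) differentiable (at p)"
    using nth_diff[OF nth_diff[OF hd]] by blast
  have bcd: "\<And>a. (\<lambda>q. \<beta> q $ a) differentiable (at p)"
    using nth_diff[OF bd] by blast
  have b0: "\<And>a. pd (\<lambda>q. \<beta> q $ a) 3 p = 0" using assms(7) pU by (simp add: zidx_def)
  have z1: "\<And>l. dG 3 l 3 = 0"
  proof -
    fix l :: 3
    have "l = 1 \<or> l = 2 \<or> l = 3" using exhaust_3 by blast
    then show "dG 3 l 3 = 0" unfolding dG_def G_def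
      by (elim disjE; simp only: kk_entries b0 pd_const)
  qed
  have z2: "\<And>k. dG k 3 3 = 0" unfolding dG_def G_def by (simp only: kk_entries pd_const)
  define dh where "dh = (\<lambda>a b. pd (\<lambda>q. h q $ a $ b) 3 p)"
  have dh21: "dh 2 1 = dh 1 2" unfolding dh_def by (rule pd_local[OF oU pU]) (rule sym)
  have gen: "\<And>a b. pd (\<lambda>q. \<beta> q $ a * \<beta> q $ b + h q $ a $ b) 3 p = dh a b"
    by (simp add: pd_add[OF differentiable_mult[OF bcd bcd] hcd] pd_mult[OF bcd bcd] b0 dh_def)
  have dGh: "dG 3 1 1 = dh 1 1" "dG 3 1 2 = dh 1 2" "dG 3 2 1 = dh 1 2" "dG 3 2 2 = dh 2 2"
    unfolding dG_def G_def kk_entries gen using dh21 by simp_all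
  have detpd: "pd (\<lambda>q. det (h q)) 3 p = dh 1 1 * h p $2$2 + h p $1$1 * dh 2 2 - 2 * dh 1 2 * h p $1$2"
  proof -
    have "pd (\<lambda>q. det (h q)) 3 p = pd (\<lambda>q. h q $1$1 * h q $2$2 - h q $1$2 * h q $2$1) 3 p"
      by (simp add: det_2)
    also have "\<dots> = dh 1 1 * h p $2$2 + h p $1$1 * dh 2 2 - (dh 1 2 * h p $2$1 + h p $1$2 * dh 2 1)"
      by (simp add: pd_diff pd_mult hcd dh_def)
    finally show ?thesis using sym[OF pU] dh21 by (simp add: algebra_simps)
  qed
  have S: "(\<Sum>i\<in>UNIV. \<Sum>l\<in>UNIV. M i l * dG 3 l i) = 0"
  proof -
    define D where "D = h p $1$1 * h p $2$2 - h p $1$2 * h p $1$2"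
    have D0: "D \<noteq> 0" using Dne[OF pU] D_def by simp
    have z3: "dG 3 3 1 = 0" "dG 3 3 2 = 0" using z1 sG by metis+
    have "(\<Sum>i\<in>UNIV. \<Sum>l\<in>UNIV. M i l * dG 3 l i) = pd (\<lambda>q. det (h q)) 3 p / D"
      unfolding detpd using D0
      by (simp only: sum_3 M_def Minv_entries D_def[symmetric] dGh z1 z3; simp add: field_simps)
    then show ?thesis using assms(6) pU by (simp add: zidx_def)
  qed
  have pdT: "\<And>k i j. pd (\<lambda>q. T_field c G q $ i $ j) k p = -(c/3) * dM k i j"
  proof -
    fix k i j
    have "pd (\<lambda>q. T_field c G q $ i $ j) k p
       = pd (\<lambda>q. c * ((if i = zidx \<and> j = zidx then 1 else 0) - 1/3 * Minv (h q) (\<beta> q) $ i $ j)) k p"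
      by (rule pd_local[OF oU pU]) (simp add: T_field_def inv)
    also have "\<dots> = -(c/3) * dM k i j"
      apply (subst pd_cmult, intro derivative_intros Md)
      apply (subst pd_diff, (intro derivative_intros Md)+)
      apply (subst pd_cmult, rule Md)
      apply (simp add: pd_const dM_def)
      done
    finally show "pd (\<lambda>q. T_field c G q $ i $ j) k p = -(c/3) * dM k i j" .
  qed
  have chr: "\<And>i j k. christoffel G i j k p = 1/2 * (\<Sum>l\<in>UNIV. M i l * (dG j l k + dG k l j - dG l j k))"
    by (simp add: christoffel_def inv[OF pU] M_def dG_def)
  have Tp: "\<And>k j. T_field c G p $ k $ j = c * ((if k = 3 \<and> j = 3 then 1 else 0) - 1/3 * M k j)"
    by (simp add: T_field_def inv[OF pU] M_def zidx_def)
  have cov: "\<forall>j. cov_div G (T_field c G) j p = 0"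
  proof
    fix j
    have "cov_div G (T_field c G) j p =
     (\<Sum>i\<in>UNIV. - (c/3) * - (\<Sum>a\<in>UNIV. \<Sum>b\<in>UNIV. M i a * dG i a b * M b j))
     + (\<Sum>i\<in>UNIV. \<Sum>k\<in>UNIV. ((1/2) * (\<Sum>l\<in>UNIV. M i l * (dG i l k + dG k l i - dG l i k))) * (c * ((if k = 3 \<and> j = 3 then 1 else 0) - 1/3 * M k j)))
     + (\<Sum>i\<in>UNIV. \<Sum>k\<in>UNIV. ((1/2) * (\<Sum>l\<in>UNIV. M j l * (dG i l k + dG k l i - dG l i k))) * (c * ((if i = 3 \<and> k = 3 then 1 else 0) - 1/3 * M i k)))"
      unfolding cov_div_def by (simp only: pdT chr Tp dMf)
    also have "\<dots> = 0" by (rule divB[where M=M and dG=dG, OF sM sG z1 z2 S])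
    finally show "cov_div G (T_field c G) j p = 0" .
  qed
  have G33: "G p $ 3 $ 3 = 1" unfolding G_def by (simp only: kk_entries)
  have K: "\<And>k l. K_up G (T_field c G) p $ k $ l = T_field c G p $ k $ l
      - 1/2 * (\<Sum>k\<in>UNIV. \<Sum>l\<in>UNIV. G p $ k $ l * T_field c G p $ k $ l) * M k l"
    by (simp add: K_up_def inv[OF pU] M_def)
  have "(\<Sum>i\<in>UNIV. \<Sum>j\<in>UNIV. M i j * (\<Sum>k\<in>UNIV. \<Sum>l\<in>UNIV. G p $ i $ k * K_up G (T_field c G) p $ k $ l * G p $ l $ j)) = 0"
    by (rule meanH[where G="\<lambda>i j. G p $ i $ j" and T="\<lambda>k l. T_field c G p $ k $ l"
          and K = "\<lambda>k l. K_up G (T_field c G) p $ k $ l" and z=3 and c=c, OF MG GM sM sGp G33 Tp K])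
  then have mc: "mean_curv G (T_field c G) p = 0"
    by (simp add: mean_curv_def K_down_def inv[OF pU] M_def)
  show "(\<forall>j. cov_div (kk_metric h \<beta>) (T_field c (kk_metric h \<beta>)) j p = 0)
         \<and> mean_curv (kk_metric h \<beta>) (T_field c (kk_metric h \<beta>)) p = 0"
    using cov mc unfolding G_def by blast
qed


end
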